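(* Let $P=(|P|,\preccurlyeq)$ be a finite poset, $S\subseteq|P|$ a chain, and $x,y$ two $\preccurlyeq$-incomparable elements of $|P|\setminus S$. Define $\preccurlyeq_{x,y}$ on $|P|$ by: $w\preccurlyeq_{x,y}z$ iff either $w\preccurlyeq z$, or ($w\preccurlyeq x$ and $y\preccurlyeq z$). Then the following are equivalent: (a) some $u\in|P|$ is $\preccurlyeq$-incomparable with at least one element of $S$ but $\preccurlyeq_{x,y}$-comparable with every element of $S$; (b) $x$ or $y$ is $\preccurlyeq$-incomparable with at least one element of $S$ but $\preccurlyeq_{x,y}$-comparable with every element of $S$; (c) $({\downarrow}x\cap S)\cup({\uparrow}y\cap S)=S$ but $({\downarrow}y\cap S)\cup({\uparrow}x\cap S)\ne S$.
   Context: For $z\in|P|$, ${\downarrow}z=\{w\in|P|: w\preccurlyeq z\}$ and ${\uparrow}z=\{w\in|P|: z\preccurlyeq w\}$. The relation $\preccurlyeq_{x,y}$ is the smallest partial ordering extending $\preccurlyeq$ in which $x\preccurlyeq_{x,y} y$. *)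

theory Defs
  imports Main
begin

definition partial_order_on_set :: "'a set \<Rightarrow> ('a \<Rightarrow> 'a \<Rightarrow> bool) \<Rightarrow> bool" where
  "partial_order_on_set P le \<longleftrightarrow>
     (\<forall>x\<in>P. le x x) \<and>
     (\<forall>x\<in>P. \<forall>y\<in>P. le x y \<and> le y x \<longrightarrow> x = y) \<and>
     (\<forall>x\<in>P. \<forall>y\<in>P. \<forall>z\<in>P. le x y \<and> le y z \<longrightarrow> le x z)"

definition comparable :: "('a \<Rightarrow> 'a \<Rightarrow> bool) \<Rightarrow> 'a \<Rightarrow> 'a \<Rightarrow> bool" where
  "comparable le a b \<longleftrightarrow> le a b \<or> le b a"

definition is_chain :: "'a set \<Rightarrow> ('a \<Rightarrow> 'a \<Rightarrow> bool) \<Rightarrow> 'a set \<Rightarrow> bool" where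
  "is_chain P le S \<longleftrightarrow> S \<subseteq> P \<and> (\<forall>a\<in>S. \<forall>b\<in>S. comparable le a b)"

definition le_xy :: "('a \<Rightarrow> 'a \<Rightarrow> bool) \<Rightarrow> 'a \<Rightarrow> 'a \<Rightarrow> 'a \<Rightarrow> 'a \<Rightarrow> bool" where
  "le_xy le x y w z \<longleftrightarrow> le w z \<or> (le w x \<and> le y z)"

definition down_set :: "'a set \<Rightarrow> ('a \<Rightarrow> 'a \<Rightarrow> bool) \<Rightarrow> 'a \<Rightarrow> 'a set" where
  "down_set P le z = {w\<in>P. le w z}"

definition up_set :: "'a set \<Rightarrow> ('a \<Rightarrow> 'a \<Rightarrow> bool) \<Rightarrow> 'a \<Rightarrow> 'a set" where
  "up_set P le z = {w\<in>P. le z w}"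

definition newly_comparable :: "('a \<Rightarrow> 'a \<Rightarrow> bool) \<Rightarrow> 'a \<Rightarrow> 'a \<Rightarrow> 'a set \<Rightarrow> 'a \<Rightarrow> bool" where
  "newly_comparable le x y S u \<longleftrightarrow>
     (\<exists>s\<in>S. \<not> comparable le u s) \<and> (\<forall>s\<in>S. comparable (le_xy le x y) u s)"

end

theory Submission
  imports Defs
begin

theorem corollary7p1:
  fixes P :: "'a set" and le :: "'a \<Rightarrow> 'a \<Rightarrow> bool" and S :: "'a set" and x y :: 'a
  assumes "finite P"
    and "partial_order_on_set P le"
    and "is_chain P le S"
    and "x \<in> P - S" and "y \<in> P - S"
    and "\<not> comparable le x y"
  shows "((\<exists>u\<in>P. newly_comparable le x y S u) \<longleftrightarrow>
            (newly_comparable le x y S x \<or> newly_comparable le x y S y))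
       \<and> ((newly_comparable le x y S x \<or> newly_comparable le x y S y) \<longleftrightarrow>
            ((down_set P le x \<inter> S) \<union> (up_set P le y \<inter> S) = S \<and>
             (down_set P le y \<inter> S) \<union> (up_set P le x \<inter> S) \<noteq> S))"
proof -
  have refl: "\<And>a. a \<in> P \<Longrightarrow> le a a" using assms(2) unfolding partial_order_on_set_def by blast
  have anti: "\<And>a b. a \<in> P \<Longrightarrow> b \<in> P \<Longrightarrow> le a b \<Longrightarrow> le b a \<Longrightarrow> a = b"
    using assms(2) unfolding partial_order_on_set_def by blast
  have tr: "\<And>a b c. a \<in> P \<Longrightarrow> b \<in> P \<Longrightarrow> c \<in> P \<Longrightarrow> le a b \<Longrightarrow> le b c \<Longrightarrow> le a c"
    using assms(2) unfolding partial_order_on_set_def by blast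
  have SP: "S \<subseteq> P" and ch: "\<And>a b. a \<in> S \<Longrightarrow> b \<in> S \<Longrightarrow> le a b \<or> le b a"
    using assms(3) unfolding is_chain_def comparable_def by auto
  have xP: "x \<in> P" "x \<notin> S" and yP: "y \<in> P" "y \<notin> S" using assms(4,5) by auto
  have nxy: "\<not> le x y" "\<not> le y x" using assms(6) unfolding comparable_def by auto
  define C where "C \<longleftrightarrow> (\<forall>s\<in>S. le s x \<or> le y s) \<and> (\<exists>s\<in>S. \<not> le s y \<and> \<not> le x s)"
  have Ceq: "((down_set P le x \<inter> S) \<union> (up_set P le y \<inter> S) = S \<and>
             (down_set P le y \<inter> S) \<union> (up_set P le x \<inter> S) \<noteq> S) \<longleftrightarrow> C"
    unfolding C_def down_set_def up_set_def using SP by blast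
  have AC: "C" if u: "u \<in> P" "newly_comparable le x y S u" for u
  proof -
    from u(2) obtain s0 where s0: "s0 \<in> S" "\<not> le u s0" "\<not> le s0 u"
      and all: "\<forall>s\<in>S. le u s \<or> (le u x \<and> le y s) \<or> le s u \<or> (le s x \<and> le y u)"
      unfolding newly_comparable_def comparable_def le_xy_def by blast
    have s0P: "s0 \<in> P" using s0 SP by auto
    from all s0 have "(le u x \<and> le y s0) \<or> (le s0 x \<and> le y u)" by blast
    then show ?thesis
    proof
      assume h: "le u x \<and> le y s0"
      have c2: "\<not> le s0 y" using anti[OF s0P yP(1)] h s0 yP by blast
      have c3: "\<not> le x s0" using tr[OF u(1) xP(1) s0P] h s0 by blast
      have "le s x \<or> le y s" if sS: "s \<in> S" for s
      proof -
        have sP: "s \<in> P" using sS SP by auto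
        consider "le u s" | "le u x \<and> le y s" | "le s u" | "le s x \<and> le y u" using all sS by blast
        then show ?thesis
        proof cases
          case 1
          then have "\<not> le s s0" using tr[OF u(1) sP s0P] s0 by blast
          then have "le s0 s" using ch[OF sS s0(1)] by blast
          then show ?thesis using tr[OF yP(1) s0P sP] h by blast
        next
          case 3 then show ?thesis using tr[OF sP u(1) xP(1)] h by blast
        qed auto
      qed
      then show ?thesis unfolding C_def using s0(1) c2 c3 by blast
    next
      assume h: "le s0 x \<and> le y u"
      have c2: "\<not> le s0 y" using tr[OF s0P yP(1) u(1)] h s0 by blast
      have c3: "\<not> le x s0" using anti[OF s0P xP(1)] h s0 xP by blast
      have "le s x \<or> le y s" if sS: "s \<in> S" for s
      proof -
        have sP: "s \<in> P" using sS SP by auto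
        consider "le u s" | "le u x \<and> le y s" | "le s u" | "le s x \<and> le y u" using all sS by blast
        then show ?thesis
        proof cases
          case 1
          then show ?thesis using tr[OF yP(1) u(1) sP] h by blast
        next
          case 3
          then have "\<not> le s0 s" using tr[OF s0P sP u(1)] s0 by blast
          then have "le s s0" using ch[OF sS s0(1)] by blast
          then show ?thesis using tr[OF sP s0P xP(1)] h by blast
        qed auto
      qed
      then show ?thesis unfolding C_def using s0(1) c2 c3 by blast
    qed
  qed
  have CB: "newly_comparable le x y S x \<or> newly_comparable le x y S y" if C
  proof -
    from \<open>C\<close> obtain s0 where s0: "s0 \<in> S" "\<not> le s0 y" "\<not> le x s0"
      and all: "\<forall>s\<in>S. le s x \<or> le y s" unfolding C_def by blast
    have s0P: "s0 \<in> P" using s0 SP by auto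
    show ?thesis
    proof (cases "le s0 x")
      case True
      have "\<not> le y s0" using tr[OF yP(1) s0P xP(1)] True nxy by blast
      then have "newly_comparable le x y S y"
        unfolding newly_comparable_def comparable_def le_xy_def using s0 all refl[OF yP(1)] by blast
      then show ?thesis by blast
    next
      case False
      then have "newly_comparable le x y S x"
        unfolding newly_comparable_def comparable_def le_xy_def using s0 all refl[OF xP(1)] by blast
      then show ?thesis by blast
    qed
  qed
  have BA: "\<exists>u\<in>P. newly_comparable le x y S u" if "newly_comparable le x y S x \<or> newly_comparable le x y S y"
    using that xP yP by blast
  show ?thesis using AC CB BA Ceq xP yP by blast
qed

end
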